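(* Let $S^*\subset(0,\infty)$ be an open set that is additive (i.e. $a,b\in S^*\Rightarrow a+b\in S^*$), let $S=[0,\infty)\setminus S^*$, and let $L=\sup S$ (finite, since $S$ is bounded). For $x\in[0,L]$ let $a(x)=\sup\{y\in\partial S: y\le x\}$, $b(x)=\inf\{y\in\partial S: y\ge x\}$, $\alpha(x)=x-a(x)$, $\beta(x)=b(x)-x$, and define $h_S:[0,L]\to\mathbb{R}$ by $$h_S(x)=\begin{cases}0 & x\in\partial S,\\ \min(\alpha(x),\beta(x)) & x\in\operatorname{Int}S,\\ -\min(\alpha(x),\beta(x)) & x\in S^*.\end{cases}$$ (Equivalently, $h_S(x)=d(x,\partial S)$ on $\operatorname{Int}S$, $-d(x,\partial S)$ on $S^*$, and $0$ on $\partial S$.) Then: (a) for each $s\in S$, the graph of $h_S$ has a horizontal chord of length $s$, i.e. there exists $x\in[0,L-s]$ with $h_S(x)=h_S(x+s)$; (b) if $x,x+s\in[0,L]$ with $s\ge 0$ and $h_S(x)=h_S(x+s)$, then $s\in S$.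
   Context: $\partial S$ and $\operatorname{Int}S$ denote the boundary and interior of $S$ in $\mathbb{R}$; $d(x,\partial S)$ is the distance from $x$ to $\partial S$. $h_S$ is continuous. *)

theory Defs
  imports "HOL-Analysis.Analysis"
begin

definition bdry_left :: "real set \<Rightarrow> real \<Rightarrow> real" where
  "bdry_left S x = Sup {y \<in> frontier S. y \<le> x}"

definition bdry_right :: "real set \<Rightarrow> real \<Rightarrow> real" where
  "bdry_right S x = Inf {y \<in> frontier S. y \<ge> x}"

text \<open>The function h_S (meant on [0, Sup S]); the last branch is the case x in S*.\<close>
definition hS :: "real set \<Rightarrow> real \<Rightarrow> real" where
  "hS S x =
     (if x \<in> frontier S then 0
      else if x \<in> interior S then min (x - bdry_left S x) (bdry_right S x - x)
      else - min (x - bdry_left S x) (bdry_right S x - x))"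

end

theory Submission
  imports Defs
begin


lemma infdist_geI: "A \<noteq> {} \<Longrightarrow> (\<And>a. a \<in> A \<Longrightarrow> d \<le> dist x a) \<Longrightarrow> d \<le> infdist x A"
  by (simp add: infdist_notempty cINF_greatest)

lemma infdist_closure_eq: "infdist x (closure A) = infdist x A"
  by (simp add: infdist_eq_setdist)

lemma frontier_sub_cl: "frontier A \<subseteq> closure (-A)"
  by (auto simp: frontier_def closure_complement)

lemma infdist_compl_frontier:
  fixes A :: "real set"
  assumes "y \<in> A" "-A \<noteq> {}"
  shows "infdist y (-A) = infdist y (frontier A)"
proof (rule antisym)
  have fne: "frontier A \<noteq> {}"
    using connected_Int_frontier[of UNIV A] assms by auto
  show "infdist y (-A) \<le> infdist y (frontier A)"
  proof -
    have "frontier A \<subseteq> closure (-A)" by (auto simp: frontier_def closure_complement)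
    then have "infdist y (closure(-A)) \<le> infdist y (frontier A)" by (rule infdist_mono[OF _ fne])
    then show ?thesis by (simp add: infdist_closure_eq)
  qed
  show "infdist y (frontier A) \<le> infdist y (-A)"
  proof (rule infdist_geI)
    fix z assume z: "z \<in> -A"
    let ?I = "{min y z .. max y z}"
    have yz: "y \<in> ?I" "z \<in> ?I" by auto
    have c1: "connected ?I" by (rule connected_Icc)
    have c2: "?I \<inter> A \<noteq> {}" using yz(1) assms(1) by (auto simp del: atLeastAtMost_iff)
    have c3: "?I - A \<noteq> {}" using yz(2) z by (auto simp del: atLeastAtMost_iff)
    have "?I \<inter> frontier A \<noteq> {}"
      by (rule connected_Int_frontier[OF c1 c2 c3])
    then obtain w where w: "w \<in> ?I" "w \<in> frontier A" by blast
    have "dist y w \<le> dist y z" using w(1) by (auto simp: dist_real_def)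
    then show "infdist y (frontier A) \<le> dist y z" using infdist_le[OF w(2), of y] by linarith
  qed (use assms in auto)
qed

lemma infdist_min_ab:
  fixes T :: "real set"
  assumes "a \<in> T" "b \<in> T" "a \<le> y" "y \<le> b" "\<forall>z\<in>T. z \<le> y \<longrightarrow> z \<le> a" "\<forall>z\<in>T. y \<le> z \<longrightarrow> b \<le> z"
  shows "infdist y T = min (y - a) (b - y)"
proof (rule antisym)
  show "infdist y T \<le> min (y - a) (b - y)"
    using infdist_le[OF assms(1), of y] infdist_le[OF assms(2), of y] assms(3,4)
    by (auto simp: dist_real_def)
  show "min (y - a) (b - y) \<le> infdist y T"
  proof (rule infdist_geI)
    fix z assume "z \<in> T"
    then show "min (y - a) (b - y) \<le> dist y z"
      using assms(5,6) by (cases "z \<le> y") (force simp: dist_real_def)+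
  qed (use assms in auto)
qed


locale addS =
  fixes Sstar :: "real set"
  assumes op: "open Sstar" and pos: "Sstar \<subseteq> {0<..}"
    and add: "\<And>a b. a \<in> Sstar \<Longrightarrow> b \<in> Sstar \<Longrightarrow> a + b \<in> Sstar"
    and bdd: "bdd_above ({0..} - Sstar)"
begin

abbreviation "S \<equiv> {0..} - Sstar"
abbreviation "L \<equiv> Sup S"
abbreviation "H y \<equiv> infdist y (-S) - infdist y S"

lemma closedS: "closed S"
  using op by (intro closed_Diff) auto

lemma S0: "0 \<in> S" using pos by auto

lemma Sne: "S \<noteq> {}" using S0 by auto

lemma LS: "L \<in> S" using closed_contains_Sup[OF Sne bdd closedS] .

lemma leL: "y \<in> S \<Longrightarrow> y \<le> L" by (rule cSup_upper[OF _ bdd])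

lemma L0: "0 \<le> L" using leL[OF S0] .

lemma nS: "-S \<noteq> {}"
proof -
  have "(-1::real) \<in> -S" by auto
  then show ?thesis by auto
qed

lemma Sstar_pos: "y \<in> Sstar \<Longrightarrow> 0 < y" using pos by auto

lemma fr: "frontier S = S - interior S"
  using closedS by (simp add: frontier_def closure_closed)

lemma T0: "0 \<in> frontier S"
proof -
  have "0 \<notin> interior S"
  proof
    assume "0 \<in> interior S"
    then obtain e where e: "e > 0" "ball 0 e \<subseteq> S" using mem_interior by blast
    then have "-e/2 \<in> ball 0 e" by (auto simp: dist_real_def)
    with e have "-e/2 \<in> S" by (meson subsetD)
    with e show False by auto
  qed
  then show ?thesis using fr S0 by auto
qed

lemma TL: "L \<in> frontier S"
proof -
  have "L \<notin> interior S"
  proof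
    assume "L \<in> interior S"
    then obtain e where e: "e > 0" "ball L e \<subseteq> S" using mem_interior by blast
    then have "L + e/2 \<in> ball L e" by (auto simp: dist_real_def)
    with e have "L + e/2 \<in> S" by (meson subsetD)
    then have "L + e/2 \<le> L" using leL by blast
    with e show False by auto
  qed
  then show ?thesis using fr LS by auto
qed

end

context addS begin
lemma infdist_T:
  assumes "0 \<le> y" "y \<le> L"
  shows "infdist y (frontier S) = min (y - bdry_left S y) (bdry_right S y - y)"
proof -
  let ?A = "{z \<in> frontier S. z \<le> y}"
  let ?B = "{z \<in> frontier S. z \<ge> y}"
  have "?A = frontier S \<inter> {..y}" by auto
  then have cA: "closed ?A" by (simp add: closed_Int frontier_closed)
  have "?B = frontier S \<inter> {y..}" by auto
  then have cB: "closed ?B" by (simp add: closed_Int frontier_closed)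
  have neA: "?A \<noteq> {}" using T0 assms by auto
  have neB: "?B \<noteq> {}" using TL assms by auto
  have bA: "bdd_above ?A" by (rule bdd_aboveI[of _ y]) auto
  have bB: "bdd_below ?B" by (rule bdd_belowI[of _ y]) auto
  have a: "bdry_left S y \<in> ?A" unfolding bdry_left_def
    using closed_contains_Sup[OF neA bA cA] .
  have b: "bdry_right S y \<in> ?B" unfolding bdry_right_def
    using closed_contains_Inf[OF neB bB cB] .
  show ?thesis
  proof (rule infdist_min_ab)
    show "\<forall>z\<in>frontier S. z \<le> y \<longrightarrow> z \<le> bdry_left S y"
      unfolding bdry_left_def using bA by (auto intro: cSup_upper)
    show "\<forall>z\<in>frontier S. y \<le> z \<longrightarrow> bdry_right S y \<le> z"
      unfolding bdry_right_def using bB by (auto intro: cInf_lower)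
  qed (use a b in auto)
qed

end

context addS begin
lemma rep:
  assumes "0 \<le> y" "y \<le> L"
  shows "hS S y = H y"
proof -
  consider "y \<in> frontier S" | "y \<notin> frontier S" "y \<in> interior S"
    | "y \<notin> frontier S" "y \<notin> interior S" by blast
  then show ?thesis
  proof cases
    case 1
    have h: "hS S y = 0" using 1 by (simp only: hS_def if_True)
    have yS: "y \<in> S" using 1 unfolding fr by (rule DiffD1)
    have "y \<in> closure (-S)" by (rule subsetD[OF frontier_sub_cl 1])
    then have "infdist y (-S) = 0" using in_closure_iff_infdist_zero[OF nS] by blast
    moreover have "infdist y S = 0" using yS by (rule infdist_zero)
    ultimately show ?thesis using h by simp
  next
    case 2
    then have yS: "y \<in> S" using interior_subset by blast
    have h: "hS S y = min (y - bdry_left S y) (bdry_right S y - y)"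
      using 2 by (simp only: hS_def if_True if_False)
    have "infdist y (-S) = infdist y (frontier S)"
      using infdist_compl_frontier[OF yS nS] .
    moreover have "infdist y S = 0" using yS by (rule infdist_zero)
    ultimately show ?thesis using h infdist_T[OF assms] by simp
  next
    case 3
    have h: "hS S y = - min (y - bdry_left S y) (bdry_right S y - y)"
      using 3 by (simp only: hS_def if_True if_False)
    have "y \<notin> S"
    proof
      assume "y \<in> S"
      then have "y \<in> S - interior S" using 3(2) by (rule DiffI)
      then show False using 3(1) unfolding fr by (rule notE[rotated])
    qed
    then have yS: "y \<in> -S" by blast
    have ne: "- (- S) \<noteq> {}" unfolding double_complement by (rule Sne)
    have "infdist y (-(-S)) = infdist y (frontier (-S))"
      using infdist_compl_frontier[OF yS ne] .
    then have e: "infdist y S = infdist y (frontier S)" 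
      unfolding double_complement frontier_complement .
    have "infdist y (-S) = 0" using yS by (rule infdist_zero)
    then show ?thesis using h e infdist_T[OF assms] by simp
  qed
qed

lemma contH: "continuous_on A (\<lambda>y. H y)"
  by (intro continuous_intros)

lemma contHS: "continuous_on {0..L} (hS S)"
proof -
  have "continuous_on {0..L} (\<lambda>y. H y)" by (rule contH)
  moreover have "\<And>y. y \<in> {0..L} \<Longrightarrow> H y = hS S y" using rep by auto
  ultimately show ?thesis using continuous_on_cong by (metis (no_types, lifting))
qed
end

context addS begin

lemma sub_S:
  assumes "z \<in> S" "t \<in> Sstar" "t \<le> z"
  shows "z - t \<in> S"
proof -
  have "z - t \<notin> Sstar"
  proof
    assume "z - t \<in> Sstar"
    then have "(z - t) + t \<in> Sstar" using assms(2) by (rule add)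
    then show False using assms(1) by simp
  qed
  then show ?thesis using assms(3) by simp
qed

lemma Dle:
  assumes "t \<in> Sstar" "0 \<le> x"
  shows "infdist (x + t) (-S) \<le> infdist x (-S)"
proof (rule infdist_geI[OF nS])
  fix z assume z: "z \<in> -S"
  show "infdist (x + t) (-S) \<le> dist x z"
  proof (cases "z \<in> Sstar")
    case True
    then have "z + t \<in> Sstar" using assms(1) by (rule add)
    then have "z + t \<in> -S" by simp
    then have "infdist (x + t) (-S) \<le> dist (x + t) (z + t)" by (rule infdist_le)
    then show ?thesis by (simp add: dist_real_def)
  next
    case False
    then have "z < 0" using z by auto
    have "t \<in> -S" using assms(1) by simp
    then have "infdist (x + t) (-S) \<le> dist (x + t) t" by (rule infdist_le)
    then show ?thesis using \<open>z < 0\<close> assms(2) by (simp add: dist_real_def)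
  qed
qed

lemma Ege:
  assumes "t \<in> Sstar" "0 \<le> x"
  shows "infdist x S \<le> infdist (x + t) S"
proof (rule infdist_geI[OF Sne])
  fix z assume z: "z \<in> S"
  show "infdist x S \<le> dist (x + t) z"
  proof (cases "t \<le> z")
    case True
    have "z - t \<in> S" using sub_S[OF z assms(1) True] .
    then have "infdist x S \<le> dist x (z - t)" by (rule infdist_le)
    then show ?thesis by (simp add: dist_real_def)
  next
    case False
    have "infdist x S \<le> dist x 0" using S0 by (rule infdist_le)
    then show ?thesis using False assms(2) by (simp add: dist_real_def)
  qed
qed

lemma Hmono:
  assumes "t \<in> Sstar" "0 \<le> x"
  shows "H (x + t) \<le> H x"
  using Dle[OF assms] Ege[OF assms] by linarith

lemma Hnonneg: "y \<in> S \<Longrightarrow> 0 \<le> H y"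
  using infdist_nonneg[of y "-S"] by simp

lemma HL: "H L = 0"
  using rep[OF L0 order.refl] TL by (simp add: hS_def)

lemma partA:
  assumes s: "s \<in> S"
  shows "\<exists>x \<in> {0 .. L - s}. hS S x = hS S (x + s)"
proof (rule ccontr)
  assume nc: "\<not> ?thesis"
  have s0: "0 \<le> s" and sL: "s \<le> L" using s leL by auto
  have nc': "\<forall>x\<in>{0..L-s}. H x \<noteq> H (x + s)"
  proof
    fix x assume x: "x \<in> {0..L-s}"
    then have "hS S x \<noteq> hS S (x+s)" using nc by blast
    moreover have "hS S x = H x" by (rule rep) (use x s0 in auto)
    moreover have "hS S (x+s) = H (x+s)" by (rule rep) (use x s0 in auto)
    ultimately show "H x \<noteq> H (x + s)" by simp
  qed
  let ?g = "\<lambda>x. H (x + s) - H x"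
  have cg: "continuous_on {0..L-s} ?g" by (intro continuous_intros)
  have g0: "?g 0 > 0"
  proof -
    have "H 0 = 0" using rep[OF order.refl L0] T0 by (simp add: hS_def)
    moreover have "H s \<ge> 0" using Hnonneg[OF s] .
    moreover have "(0::real) \<in> {0..L-s}" using sL by simp
    then have "H 0 \<noteq> H (0 + s)" using nc' by blast
    ultimately show ?thesis by simp
  qed
  have gpos: "\<forall>x\<in>{0..L-s}. ?g x > 0"
  proof
    fix x assume x: "x \<in> {0..L-s}"
    show "?g x > 0"
    proof (rule ccontr)
      assume "\<not> ?g x > 0"
      then have "?g x \<le> 0" by simp
      moreover have "continuous_on {0..x} ?g"
        using cg by (rule continuous_on_subset) (use x in auto)
      ultimately obtain y where y: "0 \<le> y" "y \<le> x" "?g y = 0"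
        using IVT2'[of ?g x 0 0] g0 x by auto
      then have "y \<in> {0..L-s}" using x by auto
      then have "H y \<noteq> H (y + s)" using nc' by blast
      then show False using y(3) by simp
    qed
  qed
  have "L - s \<in> {0..L-s}" using sL by simp
  then have "?g (L - s) > 0" using gpos by blast
  then have "H (L - s) < 0" using HL by simp
  then have Ls: "L - s \<in> Sstar"
  proof (rule contrapos_pp)
    assume "L - s \<notin> Sstar"
    then have "L - s \<in> S" using sL by simp
    then have "0 \<le> H (L - s)" by (rule Hnonneg)
    then show "\<not> H (L - s) < 0" by linarith
  qed
  obtain x0 where x0: "x0 \<in> {0..L}" "\<forall>y\<in>{0..L}. H x0 \<le> H y"
    using continuous_attains_inf[of "{0..L}" "\<lambda>y. H y"] contH L0 by auto
  define m where "m = H x0"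
  define M where "M = {x \<in> {0..L}. H x = m}"
  have cM: "closed M" unfolding M_def
    by (rule continuous_closed_preimage_constant[OF contH]) simp
  have neM: "M \<noteq> {}" using x0 unfolding M_def m_def by auto
  have bM: "bdd_above M" unfolding M_def by (rule bdd_aboveI[of _ L]) auto
  define xs where "xs = Sup M"
  have xsM: "xs \<in> M" unfolding xs_def using closed_contains_Sup[OF neM bM cM] .
  have xs: "0 \<le> xs" "xs \<le> L" "H xs = m" using xsM unfolding M_def by auto
  have "xs < s"
  proof (rule ccontr)
    assume "\<not> xs < s"
    then have "xs - s \<in> {0..L-s}" using xs by auto
    then have "?g (xs - s) > 0" using gpos by blast
    then have "H (xs - s) < m" using xs by simp
    moreover have "xs - s \<in> {0..L}" using \<open>xs - s \<in> {0..L-s}\<close> sL s0 by auto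
    then have "m \<le> H (xs - s)" using x0(2) unfolding m_def by blast
    ultimately show False by simp
  qed
  have "H (xs + (L - s)) \<le> H xs" using Hmono[OF Ls xs(1)] .
  moreover have "xs + (L - s) \<in> {0..L}" using xs \<open>xs < s\<close> sL by auto
  moreover have "m \<le> H (xs + (L - s))" using x0(2) \<open>xs + (L - s) \<in> {0..L}\<close> unfolding m_def by blast
  ultimately have "xs + (L - s) \<in> M"
    using xs(3) unfolding M_def by simp
  then have "xs + (L - s) \<le> xs" unfolding xs_def using bM by (rule cSup_upper)
  moreover have "L - s > 0" using Ls Sstar_pos by blast
  ultimately show False by simp
qed

end

context addS begin

lemma partB:
  assumes s0: "0 \<le> s" and x: "0 \<le> x" "x \<le> L" and xsL: "x + s \<le> L"
    and eq: "hS S x = hS S (x + s)"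
  shows "s \<in> S"
proof (rule ccontr)
  assume "s \<notin> S"
  then have sS: "s \<in> Sstar" using s0 by simp
  have r1: "hS S x = H x" by (rule rep[OF x])
  have r2: "hS S (x + s) = H (x + s)" by (rule rep) (use x s0 xsL in auto)
  have eqH: "H x = H (x + s)" using eq r1 r2 by simp
  have D: "infdist (x + s) (-S) \<le> infdist x (-S)" by (rule Dle[OF sS x(1)])
  have E: "infdist x S \<le> infdist (x + s) S" by (rule Ege[OF sS x(1)])
  have Deq: "infdist (x + s) (-S) = infdist x (-S)" using eqH D E by linarith
  have Eeq: "infdist (x + s) S = infdist x S" using eqH D E by linarith
  obtain \<delta> where \<delta>: "\<delta> > 0" "ball s \<delta> \<subseteq> Sstar" using op sS open_contains_ball by blast
  have inb: "t \<in> Sstar" if "\<bar>t - s\<bar> < \<delta>" for t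
  proof -
    have "t \<in> ball s \<delta>" using that by (simp add: dist_real_def abs_minus_commute)
    then show ?thesis by (rule subsetD[OF \<delta>(2)])
  qed
  show False
  proof (cases "x \<in> S")
    case True
    have "infdist x S = 0" using True by (rule infdist_zero)
    then have "infdist (x + s) S = 0" using Eeq by simp
    then have xsS: "x + s \<in> S" using in_closed_iff_infdist_zero[OF closedS Sne] by blast
    show False
    proof (cases "x = 0")
      case True then show False using xsS sS by simp
    next
      case False then have xp: "x > 0" using x by simp
      show False
      proof (cases "infdist x (-S) = 0")
        case True
        then have "x \<in> closure (-S)" using in_closure_iff_infdist_zero[OF nS] by blast
        moreover have "min \<delta> x > 0" using \<delta> xp by simp
        ultimately obtain q where q: "q \<in> -S" "dist q x < min \<delta> x"
          using closure_approachable by blast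
        then have "q > 0" by (auto simp: dist_real_def)
        then have qS: "q \<in> Sstar" using q(1) by auto
        have "x + s - q \<in> Sstar" by (rule inb) (use q in \<open>auto simp: dist_real_def\<close>)
        then have "q + (x + s - q) \<in> Sstar" by (rule add[OF qS])
        then show False using xsS by simp
      next
        case False
        define d where "d = infdist x (-S)"
        have dp: "d > 0" using False infdist_nonneg[of x "-S"] unfolding d_def by linarith
        have cne: "closure (-S) \<noteq> {}" using nS by simp
        obtain p where p: "p \<in> closure (-S)" "infdist x (closure (-S)) = dist x p"
          using infdist_attains_inf[OF closed_closure cne] by blast
        have dp2: "dist x p = d" using p(2) unfolding d_def infdist_closure_eq by simp
        define \<epsilon> where "\<epsilon> = min (\<delta>/2) (min x d)"
        have \<epsilon>: "\<epsilon> > 0" "\<epsilon> < \<delta>" "\<epsilon> \<le> x" "\<epsilon> \<le> d" using \<delta> xp dp by (auto simp: \<epsilon>_def)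
        have "infdist (x + s) (-S) \<le> d - \<epsilon>"
        proof (cases "p < x")
          case True
          have t: "s + \<epsilon> \<in> Sstar" by (rule inb) (use \<epsilon> in auto)
          have "infdist ((x - \<epsilon>) + (s + \<epsilon>)) (-S) \<le> infdist (x - \<epsilon>) (-S)"
            by (rule Dle[OF t]) (use \<epsilon> in auto)
          also have "\<dots> = infdist (x - \<epsilon>) (closure (-S))" by (simp only: infdist_closure_eq)
          also have "\<dots> \<le> dist (x - \<epsilon>) p" by (rule infdist_le[OF p(1)])
          also have "\<dots> = d - \<epsilon>" using dp2 True \<epsilon> by (auto simp: dist_real_def)
          finally show ?thesis by simp
        next
          case False
          then have px: "p > x" using dp2 dp by (cases "p = x") auto
          have t: "s - \<epsilon> \<in> Sstar" by (rule inb) (use \<epsilon> in auto)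
          have "infdist ((x + \<epsilon>) + (s - \<epsilon>)) (-S) \<le> infdist (x + \<epsilon>) (-S)"
            by (rule Dle[OF t]) (use \<epsilon> x in auto)
          also have "\<dots> = infdist (x + \<epsilon>) (closure (-S))" by (simp only: infdist_closure_eq)
          also have "\<dots> \<le> dist (x + \<epsilon>) p" by (rule infdist_le[OF p(1)])
          also have "\<dots> = d - \<epsilon>" using dp2 px \<epsilon> by (auto simp: dist_real_def)
          finally show ?thesis by simp
        qed
        then show False using Deq dp \<epsilon> unfolding d_def by linarith
      qed
    qed
  next
    case False
    define e where "e = infdist x S"
    have ep: "e > 0" unfolding e_def by (rule infdist_pos_not_in_closed[OF closedS Sne False])
    obtain z where z: "z \<in> S" "infdist (x + s) S = dist (x + s) z"
      using infdist_attains_inf[OF closedS Sne] by blast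
    have dz: "dist (x + s) z = e" using z Eeq e_def by simp
    have ex: "e \<le> x" using infdist_le[OF S0, of x] x(1) unfolding e_def by (simp add: dist_real_def)
    have sz: "s \<le> z"
    proof (rule ccontr)
      assume "\<not> s \<le> z"
      then have "dist (x + s) z > x" by (simp add: dist_real_def)
      then show False using dz ex by simp
    qed
    define w where "w = z - s"
    have wS: "w \<in> S" unfolding w_def by (rule sub_S[OF z(1) sS sz])
    have dw: "\<bar>x - w\<bar> = e" using dz unfolding w_def by (simp add: dist_real_def)
    define \<epsilon> where "\<epsilon> = min (\<delta>/2) e"
    have \<epsilon>: "\<epsilon> > 0" "\<epsilon> < \<delta>" "\<epsilon> \<le> e" using \<delta> ep by (auto simp: \<epsilon>_def)
    have "e \<le> e - \<epsilon>"
    proof (cases "w < x")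
      case True
      have t: "s - \<epsilon> \<in> Sstar" by (rule inb) (use \<epsilon> in auto)
      have "z - (s - \<epsilon>) \<in> S" by (rule sub_S[OF z(1) t]) (use sz \<epsilon> in auto)
      then have "e \<le> dist x (z - (s - \<epsilon>))" unfolding e_def by (rule infdist_le)
      also have "\<dots> = e - \<epsilon>" using dw True \<epsilon> unfolding w_def by (auto simp: dist_real_def)
      finally show ?thesis .
    next
      case False
      then have wx: "w > x" using dw ep by (cases "w = x") auto
      have t: "s + \<epsilon> \<in> Sstar" by (rule inb) (use \<epsilon> in auto)
      have "z - (s + \<epsilon>) \<in> S" by (rule sub_S[OF z(1) t]) (use dw wx \<epsilon> x in \<open>auto simp: w_def\<close>)
      then have "e \<le> dist x (z - (s + \<epsilon>))" unfolding e_def by (rule infdist_le)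
      also have "\<dots> = e - \<epsilon>" using dw wx \<epsilon> unfolding w_def by (auto simp: dist_real_def)
      finally show ?thesis .
    qed
    then show False using \<epsilon> by simp
  qed
qed

end

theorem proposition4:
  fixes Sstar :: "real set"
  assumes "open Sstar"
    and "Sstar \<subseteq> {0<..}"
    and "\<And>a b. a \<in> Sstar \<Longrightarrow> b \<in> Sstar \<Longrightarrow> a + b \<in> Sstar"
    and "bdd_above ({0..} - Sstar)"
  shows "(\<forall>s \<in> {0..} - Sstar. \<exists>x \<in> {0 .. Sup ({0..} - Sstar) - s}.
            hS ({0..} - Sstar) x = hS ({0..} - Sstar) (x + s))
       \<and> (\<forall>x s. s \<ge> 0 \<and> x \<in> {0 .. Sup ({0..} - Sstar)} \<and> x + s \<in> {0 .. Sup ({0..} - Sstar)}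
            \<and> hS ({0..} - Sstar) x = hS ({0..} - Sstar) (x + s) \<longrightarrow> s \<in> {0..} - Sstar)"
proof -
  interpret addS Sstar using assms by unfold_locales auto
  show ?thesis
  proof (intro conjI ballI allI impI)
    fix s assume "s \<in> {0..} - Sstar"
    then show "\<exists>x \<in> {0 .. Sup ({0..} - Sstar) - s}.
            hS ({0..} - Sstar) x = hS ({0..} - Sstar) (x + s)" by (rule partA)
  next
    fix x s assume h: "s \<ge> 0 \<and> x \<in> {0 .. Sup ({0..} - Sstar)} \<and> x + s \<in> {0 .. Sup ({0..} - Sstar)}
            \<and> hS ({0..} - Sstar) x = hS ({0..} - Sstar) (x + s)"
    show "s \<in> {0..} - Sstar" by (rule partB[of s x]) (use h in auto)
  qed
qed


end
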